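(* Let $\mathcal{P}$ be a probability distribution on $\mathbb{R}^d$ such that $d$ points chosen independently from $\mathcal{P}$ are almost surely affinely independent. For integers $m \ge 0$ and $k \ge 0$, let $s_k(m)$ denote the expected number of $k$-sets of a set of $m$ points chosen independently from $\mathcal{P}$. Then for every positive integer $n$, $$s_0(n) \ge s_0(n-1) + \frac{d\, s_0(n) - s_1(n)}{n},$$ and for every integer $1 \le r \le n$, $$s_0(r) \ge \frac{\binom{n-d}{r-d}}{\binom{n}{r}}\, s_0(n) + \frac{\binom{n-d-1}{r-d}}{\binom{n}{r}}\, s_1(n).$$
   Context: Let $S$ be a finite set of points in $\mathbb{R}^d$ and $k \ge 0$ an integer. A $k$-set of $S$ is a subset $\{p_1,\dots,p_d\} \subseteq S$ of $d$ points spanning a hyperplane that bounds an open halfspace containing exactly $k$ points of $S$; the $k$-set is said to cut off these $k$ points. The number $s_k(S)$ of $k$-sets of $S$ counts such $d$-subsets together with the open halfspace: if both open halfspaces bounded by the hyperplane contain exactly $k$ points of $S$, the $k$-set is counted twice. In particular $0$-sets are the facets of the convex hull of $S$. Binomial coefficients $\binom{a}{b}$ with $b<0$ or $b>a$ are zero. *)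

theory Defs
  imports "HOL-Probability.Probability"
begin

definition ibinom :: "int \<Rightarrow> int \<Rightarrow> nat" where
  "ibinom a b = (if 0 \<le> b \<and> b \<le> a then nat a choose nat b else 0)"

definition open_halfspaces_through :: "(nat \<Rightarrow> 'a::euclidean_space) \<Rightarrow> nat set \<Rightarrow> 'a set set" where
  "open_halfspaces_through x I =
     {{y. a \<bullet> y > b} | a b. a \<noteq> 0 \<and> (\<forall>i\<in>I. a \<bullet> x i = b)}"

definition spanning_dsubset :: "(nat \<Rightarrow> 'a::euclidean_space) \<Rightarrow> nat \<Rightarrow> nat set \<Rightarrow> bool" where
  "spanning_dsubset x m I \<longleftrightarrow> I \<subseteq> {..<m} \<and> card I = DIM('a) \<and> inj_on x I
      \<and> \<not> affine_dependent (x ` I)"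

definition num_ksets :: "nat \<Rightarrow> nat \<Rightarrow> (nat \<Rightarrow> 'a::euclidean_space) \<Rightarrow> nat" where
  "num_ksets k m x =
     (\<Sum>I\<in>{I. spanning_dsubset x m I}.
        card {h \<in> open_halfspaces_through x I. card {j\<in>{..<m}. x j \<in> h} = k})"

definition expected_ksets :: "'a::euclidean_space measure \<Rightarrow> nat \<Rightarrow> nat \<Rightarrow> real" where
  "expected_ksets P k m =
     (\<integral>x. real (num_ksets k m x) \<partial>(PiM {..<m} (\<lambda>_. P)))"

end

theory Submission
  imports Defs
begin

function gsf :: "(nat \<Rightarrow> 'a::real_inner) \<Rightarrow> nat \<Rightarrow> 'a" where
  "gsf v l = v l - (\<Sum>j<l. ((v l \<bullet> gsf v j) / (gsf v j \<bullet> gsf v j)) *\<^sub>R gsf v j)"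
  by auto
termination by (relation "Wellfounded.measure snd") auto

declare gsf.simps[simp del]

lemma pr_orth:
  fixes w :: "nat \<Rightarrow> 'a::real_inner"
  assumes orth: "\<And>a c. a < L \<Longrightarrow> c < L \<Longrightarrow> a \<noteq> c \<Longrightarrow> w a \<bullet> w c = 0" and j: "j < L"
  shows "(u - (\<Sum>i<L. ((u \<bullet> w i) / (w i \<bullet> w i)) *\<^sub>R w i)) \<bullet> w j = 0"
proof -
  have "(\<Sum>i<L. ((u \<bullet> w i) / (w i \<bullet> w i)) *\<^sub>R w i) \<bullet> w j
      = (\<Sum>i<L. ((u \<bullet> w i) / (w i \<bullet> w i)) * (w i \<bullet> w j))"
    by (simp add: inner_sum_left)
  also have "\<dots> = (\<Sum>i<L. if i = j then ((u \<bullet> w j) / (w j \<bullet> w j)) * (w j \<bullet> w j) else 0)"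
    by (rule sum.cong) (auto simp: orth j)
  also have "\<dots> = ((u \<bullet> w j) / (w j \<bullet> w j)) * (w j \<bullet> w j)"
    using j by (simp add: sum.delta)
  also have "\<dots> = u \<bullet> w j"
    by (cases "w j = 0") auto
  finally show ?thesis by (simp add: inner_diff_left)
qed

lemma pr_in_span:
  fixes w :: "nat \<Rightarrow> 'a::real_inner"
  shows "(\<Sum>i<L. ((u \<bullet> w i) / (w i \<bullet> w i)) *\<^sub>R w i) \<in> span (w ` {..<L})"
  by (intro span_sum span_scale span_base) auto

lemma gsf_orth_aux: "\<forall>j<i. gsf v i \<bullet> gsf v j = 0"
proof (induction i rule: less_induct)
  case (less i)
  have o: "gsf v a \<bullet> gsf v c = 0" if "a < i" "c < i" "a \<noteq> c" for a c
  proof (cases "c < a")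
    case True then show ?thesis using less that by auto
  next
    case False then have "a < c" using that by auto
    then have "gsf v c \<bullet> gsf v a = 0" using less that by auto
    then show ?thesis by (simp add: inner_commute)
  qed
  show ?case
  proof (intro allI impI)
    fix j assume "j < i"
    show "gsf v i \<bullet> gsf v j = 0"
      apply (subst gsf.simps[of v i])
      by (rule pr_orth[OF o \<open>j < i\<close>])
  qed
qed

lemma gsf_orth: "i \<noteq> j \<Longrightarrow> gsf v i \<bullet> gsf v j = 0"
  using gsf_orth_aux by (metis inner_commute linorder_neq_iff)

lemma gsf_span: "span (gsf v ` {..<l}) = span (v ` {..<l})"
proof (induction l)
  case 0 then show ?case by simp
next
  case (Suc l)
  have e: "gsf v l = v l - (\<Sum>j<l. ((v l \<bullet> gsf v j) / (gsf v j \<bullet> gsf v j)) *\<^sub>R gsf v j)"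
    by (rule gsf.simps)
  have p: "(\<Sum>j<l. ((v l \<bullet> gsf v j) / (gsf v j \<bullet> gsf v j)) *\<^sub>R gsf v j) \<in> span (v ` {..<l})"
    using pr_in_span[where u="v l" and L=l and w="gsf v"] Suc by simp
  have s1: "span (gsf v ` {..<l}) \<subseteq> span (v ` {..<Suc l})"
    using Suc by (metis lessThan_Suc image_insert span_mono subset_insertI)
  have s2: "span (v ` {..<l}) \<subseteq> span (gsf v ` {..<Suc l})"
    using Suc by (metis lessThan_Suc image_insert span_mono subset_insertI)
  show ?case unfolding span_eq
  proof
    show "gsf v ` {..<Suc l} \<subseteq> span (v ` {..<Suc l})"
    proof
      fix y assume "y \<in> gsf v ` {..<Suc l}"
      then obtain i where i: "i < Suc l" "y = gsf v i" by auto
      show "y \<in> span (v ` {..<Suc l})"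
      proof (cases "i = l")
        case True
        have "v l \<in> span (v ` {..<Suc l})" by (intro span_base) auto
        moreover have "(\<Sum>j<l. ((v l \<bullet> gsf v j) / (gsf v j \<bullet> gsf v j)) *\<^sub>R gsf v j) \<in> span (v ` {..<Suc l})"
          using p span_mono[of "v ` {..<l}" "v ` {..<Suc l}"] by (meson image_mono lessThan_subset_iff le_SucI order_refl subsetD)
        ultimately show ?thesis using True i e by (simp add: span_diff)
      next
        case False then have "i < l" using i by auto
        then have "y \<in> span (gsf v ` {..<l})" using i by (intro span_base) auto
        then show ?thesis using s1 by auto
      qed
    qed
  next
    show "v ` {..<Suc l} \<subseteq> span (gsf v ` {..<Suc l})"
    proof
      fix y assume "y \<in> v ` {..<Suc l}"
      then obtain i where i: "i < Suc l" "y = v i" by auto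
      show "y \<in> span (gsf v ` {..<Suc l})"
      proof (cases "i = l")
        case True
        have "gsf v l \<in> span (gsf v ` {..<Suc l})" by (intro span_base) auto
        moreover have "(\<Sum>j<l. ((v l \<bullet> gsf v j) / (gsf v j \<bullet> gsf v j)) *\<^sub>R gsf v j) \<in> span (gsf v ` {..<Suc l})"
          using p s2 by auto
        ultimately have "gsf v l + (\<Sum>j<l. ((v l \<bullet> gsf v j) / (gsf v j \<bullet> gsf v j)) *\<^sub>R gsf v j) \<in> span (gsf v ` {..<Suc l})"
          by (simp add: span_add)
        then show ?thesis using True i e by simp
      next
        case False then have "i < l" using i by auto
        then have "y \<in> span (v ` {..<l})" using i by (intro span_base) auto
        then show ?thesis using s2 by auto
      qed
    qed
  qed
qed

lemma orth_span_zero: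
  fixes g :: "'a::real_inner"
  assumes "g \<in> span S" "\<And>y. y \<in> S \<Longrightarrow> g \<bullet> y = 0"
  shows "g = 0"
proof -
  have "orthogonal g g" using orthogonal_to_span[OF assms(1)] assms(2) by (auto simp: orthogonal_def)
  then show ?thesis by (simp add: orthogonal_def)
qed

lemma gsf_zero: "gsf v l = 0 \<longleftrightarrow> v l \<in> span (v ` {..<l})"
proof
  assume "gsf v l = 0"
  then have "v l = (\<Sum>j<l. ((v l \<bullet> gsf v j) / (gsf v j \<bullet> gsf v j)) *\<^sub>R gsf v j)"
    using gsf.simps[of v l] by simp
  then show "v l \<in> span (v ` {..<l})" using pr_in_span[where u="v l" and L=l and w="gsf v"] gsf_span[of v l] by simp
next
  assume a: "v l \<in> span (v ` {..<l})"
  have "gsf v l \<in> span (gsf v ` {..<l})"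
    using a gsf_span[of v l] pr_in_span[where u="v l" and L=l and w="gsf v"] gsf.simps[of v l] by (simp add: span_diff)
  moreover have "\<And>y. y \<in> gsf v ` {..<l} \<Longrightarrow> gsf v l \<bullet> y = 0" using gsf_orth by (auto intro: gsf_orth)
  ultimately show "gsf v l = 0" by (rule orth_span_zero)
qed

lemma indep_iff_seq:
  fixes v :: "nat \<Rightarrow> 'a::euclidean_space"
  assumes "inj_on v {..<L}"
  shows "independent (v ` {..<L}) \<longleftrightarrow> (\<forall>l<L. v l \<notin> span (v ` {..<l}))"
  using assms
proof (induction L)
  case 0 then show ?case by (simp add: independent_empty)
next
  case (Suc L)
  have inj: "inj_on v {..<L}" using Suc.prems by (rule inj_on_subset) auto
  have nin: "v L \<notin> v ` {..<L}"
  proof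
    assume "v L \<in> v ` {..<L}"
    then obtain l where l: "l < L" "v L = v l" by auto
    then have "L = l" using inj_onD[OF Suc.prems l(2)] by auto
    then show False using l by simp
  qed
  have "v ` {..<Suc L} = insert (v L) (v ` {..<L})" by (simp add: lessThan_Suc)
  then have "independent (v ` {..<Suc L}) \<longleftrightarrow> independent (v ` {..<L}) \<and> v L \<notin> span (v ` {..<L})"
    using nin by (simp add: independent_insert)
  also have "\<dots> \<longleftrightarrow> (\<forall>l<Suc L. v l \<notin> span (v ` {..<l}))"
    using Suc.IH[OF inj] by (auto simp: less_Suc_eq)
  finally show ?case .
qed

lemma normal_multiple:
  fixes u a :: "'a::euclidean_space"
  assumes V: "subspace V" "dim V = DIM('a) - 1" and u: "u \<noteq> 0" "\<forall>y\<in>V. u \<bullet> y = 0"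
    and a: "\<forall>y\<in>V. a \<bullet> y = 0"
  shows "a = ((a \<bullet> u) / (u \<bullet> u)) *\<^sub>R u"
proof -
  let ?H = "{y. u \<bullet> y = 0}"
  have "V \<subseteq> ?H" using u by auto
  moreover have "subspace ?H" by (rule subspace_hyperplane)
  moreover have "dim ?H = DIM('a) - 1" by (rule dim_hyperplane[OF u(1)])
  ultimately have VH: "V = ?H" using V subspace_dim_equal by (metis order_refl)
  define c where "c = (a \<bullet> u) / (u \<bullet> u)"
  define y where "y = a - c *\<^sub>R u"
  have uu: "u \<bullet> u \<noteq> 0" using u by simp
  have uy: "u \<bullet> y = 0" using uu unfolding y_def c_def by (simp add: inner_diff_right inner_commute)
  then have "y \<in> V" using VH by auto
  then have ay: "a \<bullet> y = 0" using a by auto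
  have "y \<bullet> y = a \<bullet> y - c * (u \<bullet> y)" unfolding y_def by (simp add: inner_diff_left)
  then have "y = 0" using ay uy by simp
  then show ?thesis unfolding y_def c_def by simp
qed

definition vv :: "(nat \<Rightarrow> 'a::euclidean_space) \<Rightarrow> nat list \<Rightarrow> nat \<Rightarrow> 'a" where
  "vv x ls l = x (ls ! Suc l) - x (ls ! 0)"

definition resb :: "(nat \<Rightarrow> 'a::euclidean_space) \<Rightarrow> nat list \<Rightarrow> 'a \<Rightarrow> 'a" where
  "resb x ls b = b - (\<Sum>j<length ls - 1. ((b \<bullet> gsf (vv x ls) j) / (gsf (vv x ls) j \<bullet> gsf (vv x ls) j)) *\<^sub>R gsf (vv x ls) j)"

definition selnz :: "('a \<Rightarrow> 'b::zero) \<Rightarrow> 'a list \<Rightarrow> 'b" where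
  "selnz f bs = foldr (\<lambda>b acc. if f b \<noteq> 0 then f b else acc) bs 0"

definition BL :: "'a::euclidean_space list" where
  "BL = (SOME l. set l = Basis)"

lemma set_BL: "set (BL :: 'a::euclidean_space list) = Basis"
  unfolding BL_def by (rule someI_ex) (simp add: finite_list)

definition nrm :: "(nat \<Rightarrow> 'a::euclidean_space) \<Rightarrow> nat list \<Rightarrow> 'a" where
  "nrm x ls = selnz (resb x ls) BL"

lemma selnz: "(\<exists>b\<in>set bs. f b \<noteq> 0) \<Longrightarrow> selnz f bs \<noteq> 0 \<and> (\<exists>b\<in>set bs. selnz f bs = f b)"
  by (induction bs) (auto simp: selnz_def)

lemma resb_orth:
  assumes "l < length ls - 1"
  shows "resb x ls b \<bullet> vv x ls l = 0"
proof -
  let ?L = "length ls - 1"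
  have o: "resb x ls b \<bullet> gsf (vv x ls) j = 0" if "j < ?L" for j
    unfolding resb_def by (rule pr_orth[OF gsf_orth that])
  have "vv x ls l \<in> span (gsf (vv x ls) ` {..<?L})"
    using assms gsf_span[of "vv x ls" ?L] by (auto intro: span_base)
  then have "orthogonal (resb x ls b) (vv x ls l)"
    by (rule orthogonal_to_span) (auto simp: orthogonal_def o)
  then show ?thesis by (simp add: orthogonal_def)
qed

lemma resb_span: "b - resb x ls b \<in> span (vv x ls ` {..<length ls - 1})"
  unfolding resb_def using pr_in_span[where u=b and L="length ls - 1" and w="gsf (vv x ls)"]
    gsf_span[of "vv x ls" "length ls - 1"] by simp

lemma nrm_props:
  fixes x :: "nat \<Rightarrow> 'a::euclidean_space"
  assumes "length ls = DIM('a)"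
  shows "nrm x ls \<noteq> 0" "\<And>l. l < length ls - 1 \<Longrightarrow> nrm x ls \<bullet> vv x ls l = 0"
proof -
  let ?V = "vv x ls ` {..<length ls - 1}"
  have ex: "\<exists>b\<in>set BL. resb x ls b \<noteq> 0"
  proof (rule ccontr)
    assume "\<not> ?thesis"
    then have "\<forall>b\<in>Basis. b \<in> span ?V"
    proof (intro ballI)
      fix b :: 'a assume "b \<in> Basis" "\<not> (\<exists>b\<in>set BL. resb x ls b \<noteq> 0)"
      then have "resb x ls b = 0" using set_BL by auto
      then show "b \<in> span ?V" using resb_span[of b x ls] by simp
    qed
    then have "Basis \<subseteq> span ?V" by auto
    then have "span Basis \<subseteq> span ?V" by (intro span_minimal) (auto simp: subspace_span)
    then have "span ?V = UNIV" by (metis span_Basis top.extremum_uniqueI)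
    then have "dim (span ?V) = DIM('a)" by simp
    moreover have "dim (span ?V) \<le> card ?V" by (simp add: dim_le_card' dim_span)
    moreover have "card ?V \<le> length ls - 1" using card_image_le[of "{..<length ls - 1}" "vv x ls"] by simp
    ultimately show False using assms DIM_positive[where 'a='a] by linarith
  qed
  from selnz[OF ex] show "nrm x ls \<noteq> 0" unfolding nrm_def by simp
  fix l assume "l < length ls - 1"
  from selnz[OF ex] obtain b where "nrm x ls = resb x ls b" unfolding nrm_def by auto
  then show "nrm x ls \<bullet> vv x ls l = 0" using resb_orth[OF \<open>l < _\<close>] by simp
qed

lemma orth_span_all:
  fixes a :: "'a::euclidean_space"
  assumes "\<And>w. w \<in> S \<Longrightarrow> a \<bullet> w = 0" "y \<in> span S"
  shows "a \<bullet> y = 0"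
  using orthogonal_to_span[OF assms(2), of a] assms(1) by (auto simp: orthogonal_def)

lemma pts_on:
  fixes x :: "nat \<Rightarrow> 'a::euclidean_space"
  assumes "i \<in> set ls" "\<And>l. l < length ls - 1 \<Longrightarrow> a \<bullet> vv x ls l = 0"
  shows "a \<bullet> x i = a \<bullet> x (ls ! 0)"
proof -
  obtain j where j: "j < length ls" "i = ls ! j" using assms(1) by (auto simp: in_set_conv_nth)
  show ?thesis
  proof (cases j)
    case 0 then show ?thesis using j by simp
  next
    case (Suc l)
    then have "l < length ls - 1" using j by auto
    then have "a \<bullet> vv x ls l = 0" by (rule assms(2))
    then show ?thesis using j Suc by (simp add: vv_def inner_diff_right)
  qed
qed

lemma hs_char:
  fixes x :: "nat \<Rightarrow> 'a::euclidean_space"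
  assumes ls: "set ls = I" "length ls = DIM('a)"
    and u: "u \<noteq> 0" "\<And>l. l < length ls - 1 \<Longrightarrow> u \<bullet> vv x ls l = 0"
    and dimV: "dim (span (vv x ls ` {..<length ls - 1})) = DIM('a) - 1"
  shows "open_halfspaces_through x I = {{y. u \<bullet> x (ls!0) < u \<bullet> y}, {y. (-u) \<bullet> x (ls!0) < (-u) \<bullet> y}}"
proof -
  let ?p = "x (ls!0)"
  let ?V = "span (vv x ls ` {..<length ls - 1})"
  have ls0: "ls ! 0 \<in> I" using ls DIM_positive[where 'a='a] by (metis nth_mem)
  have uV: "\<forall>y\<in>?V. u \<bullet> y = 0"
    using orth_span_all[of "vv x ls ` {..<length ls - 1}" u] u(2) by auto
  show ?thesis
  proof
    show "{{y. u \<bullet> ?p < u \<bullet> y}, {y. (-u) \<bullet> ?p < (-u) \<bullet> y}} \<subseteq> open_halfspaces_through x I"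
    proof -
      have "{y. u \<bullet> ?p < u \<bullet> y} \<in> open_halfspaces_through x I"
        unfolding open_halfspaces_through_def
        using u pts_on[of _ ls u x] ls(1) by blast
      moreover have "{y. (-u) \<bullet> ?p < (-u) \<bullet> y} \<in> open_halfspaces_through x I"
      proof -
        have "\<And>l. l < length ls - 1 \<Longrightarrow> (-u) \<bullet> vv x ls l = 0" using u(2) by simp
        then have "\<forall>i\<in>I. (-u) \<bullet> x i = (-u) \<bullet> ?p" using pts_on[of _ ls "-u" x] ls(1) by blast
        then show ?thesis unfolding open_halfspaces_through_def using u(1) by (intro CollectI exI[of _ "-u"] exI[of _ "(-u) \<bullet> ?p"]) auto
      qed
      ultimately show ?thesis by auto
    qed
  next
    show "open_halfspaces_through x I \<subseteq> {{y. u \<bullet> ?p < u \<bullet> y}, {y. (-u) \<bullet> ?p < (-u) \<bullet> y}}"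
    proof
      fix h assume "h \<in> open_halfspaces_through x I"
      then obtain a b where h: "h = {y. b < a \<bullet> y}" and a0: "a \<noteq> 0" and ab: "\<forall>i\<in>I. a \<bullet> x i = b"
        unfolding open_halfspaces_through_def by auto
      have av: "a \<bullet> vv x ls l = 0" if "l < length ls - 1" for l
      proof -
        have "ls ! Suc l \<in> I" using that ls by (metis Suc_lessI less_diff_conv nth_mem add.commute plus_1_eq_Suc not_less_eq)
        then show ?thesis using ab ls0 by (simp add: vv_def inner_diff_right)
      qed
      have aV: "\<forall>y\<in>?V. a \<bullet> y = 0"
        using orth_span_all[of "vv x ls ` {..<length ls - 1}" a] av by auto
      define c where "c = (a \<bullet> u) / (u \<bullet> u)"
      have ac: "a = c *\<^sub>R u" unfolding c_def
        by (rule normal_multiple[OF subspace_span _ u(1) uV aV]) (use dimV in simp)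
      have c0: "c \<noteq> 0" using a0 ac by auto
      have b: "b = c * (u \<bullet> ?p)" using ab ls0 ac by auto
      show "h \<in> {{y. u \<bullet> ?p < u \<bullet> y}, {y. (-u) \<bullet> ?p < (-u) \<bullet> y}}"
      proof (cases "c > 0")
        case True
        then have "h = {y. u \<bullet> ?p < u \<bullet> y}" unfolding h b ac by (auto simp: mult_less_cancel_left)
        then show ?thesis by simp
      next
        case False
        then have "c < 0" using c0 by simp
        then have "h = {y. (-u) \<bullet> ?p < (-u) \<bullet> y}" unfolding h b ac by (auto simp: mult_less_cancel_left)
        then show ?thesis by simp
      qed
    qed
  qed
qed

lemma hs_distinct:
  fixes u :: "'a::euclidean_space"
  assumes "u \<noteq> 0"
  shows "{y. u \<bullet> p < u \<bullet> y} \<noteq> {y. (-u) \<bullet> p < (-u) \<bullet> y}"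
proof
  assume e: "{y. u \<bullet> p < u \<bullet> y} = {y. (-u) \<bullet> p < (-u) \<bullet> y}"
  have "u \<bullet> p < u \<bullet> (p + u)" using assms by (simp add: inner_add_right)
  then have "(-u) \<bullet> p < (-u) \<bullet> (p + u)" using e by blast
  then show False using assms inner_ge_zero[of u] by (simp add: inner_add_right)
qed

lemma card_two:
  assumes "h1 \<noteq> h2"
  shows "card {h \<in> {h1, h2}. P h} = (if P h1 then 1 else 0) + (if P h2 then 1 else 0)"
proof -
  have "{h \<in> {h1, h2}. P h} = (if P h1 then {h1} else {}) \<union> (if P h2 then {h2} else {})" by auto
  then show ?thesis using assms by (cases "P h1"; cases "P h2") auto
qed

lemma affine_vv:
  fixes x :: "nat \<Rightarrow> 'a::euclidean_space"
  assumes I: "card I = DIM('a)" and ls: "ls = sorted_list_of_set I" and inj: "inj_on x I"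
  shows "inj_on (vv x ls) {..<DIM('a) - 1}"
    and "\<not> affine_dependent (x ` I) \<longleftrightarrow> independent (vv x ls ` {..<DIM('a) - 1})"
proof -
  have fin: "finite I" using I DIM_positive[where 'a='a] card_gt_0_iff by (metis)
  have sl: "set ls = I" "distinct ls" "length ls = DIM('a)" using fin ls I by auto
  let ?p = "x (ls!0)"
  have ls0: "ls ! 0 \<in> I" using sl DIM_positive[where 'a='a] by (metis nth_mem)
  have mem: "ls ! Suc l \<in> I" if "l < DIM('a) - 1" for l
    using that sl by (metis Suc_lessI less_diff_conv nth_mem add.commute plus_1_eq_Suc not_less_eq)
  have neq: "x (ls ! Suc l) \<noteq> ?p" if "l < DIM('a) - 1" for l
  proof
    assume "x (ls ! Suc l) = ?p"
    then have "ls ! Suc l = ls ! 0" using inj_onD[OF inj] mem[OF that] ls0 by blast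
    then show False using sl that nth_eq_iff_index_eq[of ls "Suc l" 0] by auto
  qed
  show "inj_on (vv x ls) {..<DIM('a) - 1}"
  proof (rule inj_onI)
    fix l l' assume l: "l \<in> {..<DIM('a) - 1}" "l' \<in> {..<DIM('a) - 1}" "vv x ls l = vv x ls l'"
    then have "x (ls ! Suc l) = x (ls ! Suc l')" by (simp add: vv_def)
    then have "ls ! Suc l = ls ! Suc l'" using inj_onD[OF inj] mem l by auto
    then show "l = l'" using sl l nth_eq_iff_index_eq[of ls "Suc l" "Suc l'"] by auto
  qed
  have img: "(\<lambda>y. -?p + y) ` (x ` I - {?p}) = vv x ls ` {..<DIM('a) - 1}"
  proof
    show "(\<lambda>y. -?p + y) ` (x ` I - {?p}) \<subseteq> vv x ls ` {..<DIM('a) - 1}"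
    proof
      fix z assume "z \<in> (\<lambda>y. -?p + y) ` (x ` I - {?p})"
      then obtain i where i: "i \<in> I" "x i \<noteq> ?p" "z = -?p + x i" by auto
      then obtain j where j: "j < length ls" "i = ls ! j" using sl by (auto simp: in_set_conv_nth)
      then obtain l where "j = Suc l" using i by (cases j) auto
      then show "z \<in> vv x ls ` {..<DIM('a) - 1}" using i j sl
        by (intro image_eqI[of _ _ l]) (auto simp: vv_def)
    qed
  next
    show "vv x ls ` {..<DIM('a) - 1} \<subseteq> (\<lambda>y. -?p + y) ` (x ` I - {?p})"
    proof
      fix z assume "z \<in> vv x ls ` {..<DIM('a) - 1}"
      then obtain l where l: "l < DIM('a) - 1" "z = vv x ls l" by auto
      then show "z \<in> (\<lambda>y. -?p + y) ` (x ` I - {?p})"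
        using mem[OF l(1)] neq[OF l(1)] by (intro image_eqI[of _ _ "x (ls ! Suc l)"]) (auto simp: vv_def)
    qed
  qed
  have "affine_dependent (x ` I) \<longleftrightarrow> dependent ((\<lambda>y. -?p + y) ` (x ` I - {?p}))"
    using ls0 by (intro affine_dependent_iff_dependent2) auto
  then show "\<not> affine_dependent (x ` I) \<longleftrightarrow> independent (vv x ls ` {..<DIM('a) - 1})"
    using img by simp
qed

definition cnt :: "(nat \<Rightarrow> 'a::euclidean_space) \<Rightarrow> nat \<Rightarrow> 'a \<Rightarrow> 'a \<Rightarrow> real" where
  "cnt x m u p = (\<Sum>j<m. if u \<bullet> p < u \<bullet> x j then 1 else 0)"

definition Gr :: "nat \<Rightarrow> nat \<Rightarrow> nat set \<Rightarrow> (nat \<Rightarrow> 'a::euclidean_space) \<Rightarrow> real" where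
  "Gr k m I x = (if (\<forall>i\<in>I. \<forall>j\<in>I-{i}. 0 < norm (x i - x j)) \<and>
        (\<forall>l\<in>{..<DIM('a)-1}. 0 < norm (gsf (vv x (sorted_list_of_set I)) l))
     then (if cnt x m (nrm x (sorted_list_of_set I)) (x (sorted_list_of_set I ! 0)) = real k then 1 else 0)
        + (if cnt x m (- nrm x (sorted_list_of_set I)) (x (sorted_list_of_set I ! 0)) = real k then 1 else 0)
     else 0)"

lemma real_card_filter: "real (card {j\<in>{..<(m::nat)}. P j}) = (\<Sum>j<m. if P j then 1 else 0)"
proof -
  have "real (card {j\<in>{..<m}. P j}) = (\<Sum>j\<in>{j\<in>{..<m}. P j}. 1)" by simp
  also have "\<dots> = (\<Sum>j<m. if P j then 1 else 0)" using sum.inter_filter[of "{..<m}" "\<lambda>_. 1::real" P] by simp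
  finally show ?thesis .
qed

lemma spanning_char:
  fixes x :: "nat \<Rightarrow> 'a::euclidean_space"
  assumes I: "I \<subseteq> {..<m}" "card I = DIM('a)" and ls: "ls = sorted_list_of_set I"
  shows "spanning_dsubset x m I \<longleftrightarrow> (\<forall>i\<in>I. \<forall>j\<in>I-{i}. 0 < norm (x i - x j)) \<and>
        (\<forall>l\<in>{..<DIM('a)-1}. 0 < norm (gsf (vv x ls) l))"
proof -
  have inj_iff: "inj_on x I \<longleftrightarrow> (\<forall>i\<in>I. \<forall>j\<in>I-{i}. 0 < norm (x i - x j))"
    unfolding inj_on_def by auto
  have "spanning_dsubset x m I \<longleftrightarrow> inj_on x I \<and> \<not> affine_dependent (x ` I)"
    using I unfolding spanning_dsubset_def by auto
  also have "\<dots> \<longleftrightarrow> inj_on x I \<and> (\<forall>l\<in>{..<DIM('a)-1}. 0 < norm (gsf (vv x ls) l))"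
  proof (cases "inj_on x I")
    case True
    have "\<not> affine_dependent (x ` I) \<longleftrightarrow> independent (vv x ls ` {..<DIM('a) - 1})"
      using affine_vv(2)[OF I(2) ls True] .
    also have "\<dots> \<longleftrightarrow> (\<forall>l<DIM('a) - 1. vv x ls l \<notin> span (vv x ls ` {..<l}))"
      by (rule indep_iff_seq[OF affine_vv(1)[OF I(2) ls True]])
    also have "\<dots> \<longleftrightarrow> (\<forall>l\<in>{..<DIM('a)-1}. 0 < norm (gsf (vv x ls) l))"
      by (auto simp: gsf_zero)
    finally show ?thesis using True by simp
  qed simp
  finally show ?thesis using inj_iff by simp
qed

lemma term_eq:
  fixes x :: "nat \<Rightarrow> 'a::euclidean_space"
  assumes I: "I \<subseteq> {..<m}" "card I = DIM('a)"
  shows "real (if spanning_dsubset x m I then card {h \<in> open_halfspaces_through x I. card {j\<in>{..<m}. x j \<in> h} = k} else 0) = Gr k m I x"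
proof -
  define ls where "ls = sorted_list_of_set I"
  have fin: "finite I" using I DIM_positive[where 'a='a] card_gt_0_iff by metis
  have sl: "set ls = I" "distinct ls" "length ls = DIM('a)" using fin ls_def I by auto
  have sc: "spanning_dsubset x m I \<longleftrightarrow> (\<forall>i\<in>I. \<forall>j\<in>I-{i}. 0 < norm (x i - x j)) \<and>
        (\<forall>l\<in>{..<DIM('a)-1}. 0 < norm (gsf (vv x ls) l))"
    by (rule spanning_char[OF I ls_def])
  show ?thesis
  proof (cases "spanning_dsubset x m I")
    case False
    then have ncond: "\<not> ((\<forall>i\<in>I. \<forall>j\<in>I-{i}. 0 < norm (x i - x j)) \<and>
        (\<forall>l\<in>{..<DIM('a)-1}. 0 < norm (gsf (vv x ls) l)))" using sc by simp
    have "Gr k m I x = 0" unfolding Gr_def ls_def[symmetric] by (rule if_not_P[OF ncond])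
    then show ?thesis using False by simp
  next
    case True
    then have inj: "inj_on x I" and naff: "\<not> affine_dependent (x ` I)" unfolding spanning_dsubset_def by auto
    have indep: "independent (vv x ls ` {..<DIM('a) - 1})"
      using affine_vv(2)[OF I(2) ls_def inj] naff by simp
    have "dim (span (vv x ls ` {..<DIM('a) - 1})) = card (vv x ls ` {..<DIM('a) - 1})"
      by (rule dim_span_eq_card_independent[OF indep])
    also have "\<dots> = DIM('a) - 1" using card_image[OF affine_vv(1)[OF I(2) ls_def inj]] by simp
    finally have dimV: "dim (span (vv x ls ` {..<length ls - 1})) = DIM('a) - 1" using sl by simp
    define u where "u = nrm x ls"
    have u: "u \<noteq> 0" "\<And>l. l < length ls - 1 \<Longrightarrow> u \<bullet> vv x ls l = 0"
      using nrm_props[OF sl(3)] unfolding u_def by auto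
    have hs: "open_halfspaces_through x I = {{y. u \<bullet> x (ls!0) < u \<bullet> y}, {y. (-u) \<bullet> x (ls!0) < (-u) \<bullet> y}}"
      by (rule hs_char[OF sl(1) sl(3) u dimV])
    have "real (card {h \<in> open_halfspaces_through x I. card {j\<in>{..<m}. x j \<in> h} = k})
       = (if card {j\<in>{..<m}. u \<bullet> x (ls!0) < u \<bullet> x j} = k then 1 else 0)
        + (if card {j\<in>{..<m}. (-u) \<bullet> x (ls!0) < (-u) \<bullet> x j} = k then 1 else 0)"
      unfolding hs card_two[OF hs_distinct[OF u(1)]] by simp
    also have "\<dots> = (if cnt x m u (x (ls!0)) = real k then 1 else 0)
        + (if cnt x m (-u) (x (ls!0)) = real k then 1 else 0)"
    proof -
      have a: "real (card {j\<in>{..<m}. u \<bullet> x (ls!0) < u \<bullet> x j}) = cnt x m u (x (ls!0))"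
        unfolding cnt_def by (rule real_card_filter)
      have b: "real (card {j\<in>{..<m}. (-u) \<bullet> x (ls!0) < (-u) \<bullet> x j}) = cnt x m (-u) (x (ls!0))"
        unfolding cnt_def by (rule real_card_filter)
      show ?thesis by (simp only: a[symmetric] b[symmetric] of_nat_eq_iff)
    qed
    finally have c: "real (card {h \<in> open_halfspaces_through x I. card {j\<in>{..<m}. x j \<in> h} = k}) = (if cnt x m u (x (ls!0)) = real k then 1 else 0)
        + (if cnt x m (-u) (x (ls!0)) = real k then 1 else 0)" .
    have g: "Gr k m I x = (if cnt x m u (x (ls!0)) = real k then 1 else 0)
        + (if cnt x m (-u) (x (ls!0)) = real k then 1 else 0)"
      using True sc unfolding Gr_def ls_def[symmetric] u_def[symmetric] by (intro if_P) simp
    show ?thesis using True c g by simp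
  qed
qed

lemma meas_vv:
  fixes ls :: "nat list"
  assumes "set ls \<subseteq> {..<m}" "Suc l < length ls"
  shows "(\<lambda>x. vv x ls l) \<in> borel_measurable (PiM {..<m} (\<lambda>_. borel :: 'a::euclidean_space measure))"
proof -
  have "ls ! Suc l \<in> set ls" using assms(2) by (rule nth_mem)
  moreover have "ls ! 0 \<in> set ls" using assms(2) by (intro nth_mem) linarith
  ultimately have [measurable]: "ls ! Suc l \<in> {..<m}" "ls ! 0 \<in> {..<m}" using assms(1) by blast+
  show ?thesis unfolding vv_def by measurable
qed

lemma meas_gsf:
  fixes ls :: "nat list"
  assumes "set ls \<subseteq> {..<m}"
  shows "l < length ls - 1 \<Longrightarrow> (\<lambda>x. gsf (vv x ls) l) \<in> borel_measurable (PiM {..<m} (\<lambda>_. borel :: 'a::euclidean_space measure))"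
proof (induction l rule: less_induct)
  case (less l)
  have v: "(\<lambda>x. vv x ls l) \<in> borel_measurable (PiM {..<m} (\<lambda>_. borel :: 'a::euclidean_space measure))"
    using less.prems by (intro meas_vv assms) auto
  have IH: "\<And>j. j \<in> {..<l} \<Longrightarrow> (\<lambda>x. gsf (vv x ls) j) \<in> borel_measurable (PiM {..<m} (\<lambda>_. borel :: 'a::euclidean_space measure))"
    using less by auto
  have e: "(\<lambda>x. gsf (vv x ls) l) = (\<lambda>x. vv x ls l - (\<Sum>j<l. ((vv x ls l \<bullet> gsf (vv x ls) j) / (gsf (vv x ls) j \<bullet> gsf (vv x ls) j)) *\<^sub>R gsf (vv x ls) j))"
    by (rule ext, rule gsf.simps)
  show ?case unfolding e
    by (intro borel_measurable_diff borel_measurable_sum borel_measurable_scaleR borel_measurable_divide borel_measurable_inner IH v)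
qed

lemma meas_resb:
  fixes ls :: "nat list"
  assumes "set ls \<subseteq> {..<m}"
  shows "(\<lambda>x. resb x ls b) \<in> borel_measurable (PiM {..<m} (\<lambda>_. borel :: 'a::euclidean_space measure))"
proof -
  have IH: "\<And>j. j \<in> {..<length ls - 1} \<Longrightarrow> (\<lambda>x. gsf (vv x ls) j) \<in> borel_measurable (PiM {..<m} (\<lambda>_. borel :: 'a::euclidean_space measure))"
    using meas_gsf[OF assms] by auto
  show ?thesis unfolding resb_def
    by (intro borel_measurable_diff borel_measurable_sum borel_measurable_scaleR borel_measurable_divide borel_measurable_inner IH borel_measurable_const)
qed

lemma meas_selnz:
  fixes f :: "_ \<Rightarrow> _ \<Rightarrow> 'b::euclidean_space"
  assumes "\<And>b. b \<in> set bs \<Longrightarrow> (\<lambda>x. f x b) \<in> borel_measurable M"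
  shows "(\<lambda>x. selnz (f x) bs) \<in> borel_measurable M"
  using assms
proof (induction bs)
  case Nil then show ?case by (simp add: selnz_def)
next
  case (Cons b bs)
  have e: "(\<lambda>x. selnz (f x) (b # bs)) = (\<lambda>x. if f x b \<noteq> 0 then f x b else selnz (f x) bs)"
    unfolding selnz_def by simp
  have fb[measurable]: "(\<lambda>x. f x b) \<in> borel_measurable M" using Cons by auto
  have r: "(\<lambda>x. selnz (f x) bs) \<in> borel_measurable M" using Cons by auto
  have s: "{x \<in> space M. f x b \<noteq> 0} \<in> sets M"
  proof -
    have "{x \<in> space M. f x b \<noteq> 0} = {x \<in> space M. 0 < norm (f x b)}" by auto
    also have "\<dots> \<in> sets M" by measurable
    finally show ?thesis .
  qed
  show ?case unfolding e by (rule measurable_If[OF fb r s])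
qed

lemma meas_nrm:
  fixes ls :: "nat list"
  assumes "set ls \<subseteq> {..<m}"
  shows "(\<lambda>x. nrm x ls) \<in> borel_measurable (PiM {..<m} (\<lambda>_. borel :: 'a::euclidean_space measure))"
  unfolding nrm_def by (rule meas_selnz) (rule meas_resb[OF assms])

lemma meas_Gr:
  assumes I: "I \<subseteq> {..<m}" "card I = DIM('a)"
  shows "Gr k m I \<in> borel_measurable (PiM {..<m} (\<lambda>_. borel :: 'a::euclidean_space measure))"
proof -
  define ls where "ls = sorted_list_of_set I"
  have fin[simp]: "finite I" using I(1) finite_subset by blast
  have sl: "set ls = I" "length ls = DIM('a)" using I ls_def by auto
  have comp[measurable]: "i \<in> I \<Longrightarrow> i \<in> {..<m}" for i using I by auto
  have ls0[measurable]: "ls ! 0 \<in> {..<m}" using sl I DIM_positive[where 'a='a] nth_mem by (metis subsetD)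
  have g[measurable]: "l \<in> {..<DIM('a) - 1} \<Longrightarrow> (\<lambda>x. gsf (vv x ls) l) \<in> borel_measurable (PiM {..<m} (\<lambda>_. borel :: 'a::euclidean_space measure))" for l
    using meas_gsf[of ls m l] sl I by auto
  have n[measurable]: "(\<lambda>x. nrm x ls) \<in> borel_measurable (PiM {..<m} (\<lambda>_. borel :: 'a::euclidean_space measure))"
    using meas_nrm[of ls m] sl I by auto
  let ?N = "PiM {..<m} (\<lambda>_. borel :: 'a::euclidean_space measure)"
  have p1: "Measurable.pred ?N (\<lambda>x. \<forall>i\<in>I. \<forall>j\<in>I-{i}. 0 < norm (x i - x j))"
  proof (intro pred_intros_finite)
    fix i j assume "i \<in> I" "j \<in> I - {i}"
    then have [measurable]: "i \<in> {..<m}" "j \<in> {..<m}" using I by auto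
    show "Measurable.pred ?N (\<lambda>x. 0 < norm (x i - x j))" by measurable
  qed auto
  have p2: "Measurable.pred ?N (\<lambda>x. \<forall>l\<in>{..<DIM('a)-1}. 0 < norm (gsf (vv x ls) l))"
  proof (intro pred_intros_finite)
    fix l assume "l \<in> {..<DIM('a)-1}"
    then have [measurable]: "(\<lambda>x. gsf (vv x ls) l) \<in> borel_measurable ?N" by (rule g)
    show "Measurable.pred ?N (\<lambda>x. 0 < norm (gsf (vv x ls) l))" by measurable
  qed auto
  have p: "Measurable.pred ?N (\<lambda>x. (\<forall>i\<in>I. \<forall>j\<in>I-{i}. 0 < norm (x i - x j)) \<and> (\<forall>l\<in>{..<DIM('a)-1}. 0 < norm (gsf (vv x ls) l)))"
    using p1 p2 by (rule pred_intros_logic)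
  have cm: "(\<lambda>x. cnt x m (f x) (x (ls ! 0))) \<in> borel_measurable ?N"
    if f: "f \<in> borel_measurable ?N" for f
  proof -
    have p0: "(\<lambda>x. x (ls ! 0)) \<in> borel_measurable ?N" by (rule measurable_component_singleton[OF ls0])
    show ?thesis unfolding cnt_def
    proof (rule borel_measurable_sum)
      fix j assume "j \<in> {..<m}"
      then have pj: "(\<lambda>x. x j) \<in> borel_measurable ?N" by (rule measurable_component_singleton)
      show "(\<lambda>x. if f x \<bullet> x (ls ! 0) < f x \<bullet> x j then 1 else 0::real) \<in> borel_measurable ?N"
        by (rule measurable_If[OF borel_measurable_const borel_measurable_const])
           (rule borel_measurable_less[OF borel_measurable_inner[OF f p0] borel_measurable_inner[OF f pj]])
    qed
  qed
  have c1: "(\<lambda>x. cnt x m (nrm x ls) (x (ls ! 0))) \<in> borel_measurable ?N"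
    by (rule cm[OF n])
  have c2: "(\<lambda>x. cnt x m (- nrm x ls) (x (ls ! 0))) \<in> borel_measurable ?N"
    by (rule cm[OF borel_measurable_uminus[OF n]])
  have ind: "(\<lambda>x. if g x = real k then 1 else (0::real)) \<in> borel_measurable ?N"
    if g: "g \<in> borel_measurable ?N" for g
    by (rule measurable_If[OF borel_measurable_const borel_measurable_const])
       (rule borel_measurable_eq[OF g borel_measurable_const])
  have a: "(\<lambda>x. (if cnt x m (nrm x ls) (x (ls ! 0)) = real k then 1 else 0)
        + (if cnt x m (- nrm x ls) (x (ls ! 0)) = real k then 1 else (0::real))) \<in> borel_measurable ?N"
    by (rule borel_measurable_add[OF ind[OF c1] ind[OF c2]])
  have sC: "{x \<in> space ?N. (\<forall>i\<in>I. \<forall>j\<in>I-{i}. 0 < norm (x i - x j)) \<and> (\<forall>l\<in>{..<DIM('a)-1}. 0 < norm (gsf (vv x ls) l))} \<in> sets ?N"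
    using p unfolding Measurable.pred_def .
  have r: "(\<lambda>x::nat \<Rightarrow> 'a. if (\<forall>i\<in>I. \<forall>j\<in>I-{i}. 0 < norm (x i - x j)) \<and> (\<forall>l\<in>{..<DIM('a)-1}. 0 < norm (gsf (vv x ls) l))
      then (if cnt x m (nrm x ls) (x (ls ! 0)) = real k then 1 else 0)
        + (if cnt x m (- nrm x ls) (x (ls ! 0)) = real k then 1 else (0::real)) else 0) \<in> borel_measurable ?N"
    by (rule measurable_If[OF a borel_measurable_const sC])
  have pe: "Gr k m I x = (if (\<forall>i\<in>I. \<forall>j\<in>I-{i}. 0 < norm (x i - x j)) \<and> (\<forall>l\<in>{..<DIM('a)-1}. 0 < norm (gsf (vv x ls) l))
      then (if cnt x m (nrm x ls) (x (ls ! 0)) = real k then 1 else 0)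
        + (if cnt x m (- nrm x ls) (x (ls ! 0)) = real k then 1 else (0::real)) else 0)" for x :: "nat \<Rightarrow> 'a"
    by (simp only: Gr_def ls_def)
  show ?thesis by (subst measurable_cong[OF pe]) (rule r)
qed

lemma num_sum:
  fixes x :: "nat \<Rightarrow> 'a::euclidean_space"
  shows "real (num_ksets k m x) = (\<Sum>I\<in>{I. I \<subseteq> {..<m} \<and> card I = DIM('a)}. Gr k m I x)"
proof -
  let ?A = "{I. I \<subseteq> {..<m} \<and> card I = DIM('a)}"
  have finA: "finite ?A" by (rule finite_subset[of _ "Pow {..<m}"]) auto
  have e: "{I. spanning_dsubset x m I} = {I \<in> ?A. spanning_dsubset x m I}"
    unfolding spanning_dsubset_def by auto
  have "num_ksets k m x = (\<Sum>I\<in>?A. if spanning_dsubset x m I then card {h \<in> open_halfspaces_through x I. card {j\<in>{..<m}. x j \<in> h} = k} else 0)"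
    unfolding num_ksets_def e by (rule sum.inter_filter[OF finA])
  then have "real (num_ksets k m x) = (\<Sum>I\<in>?A. real (if spanning_dsubset x m I then card {h \<in> open_halfspaces_through x I. card {j\<in>{..<m}. x j \<in> h} = k} else 0))"
    by (simp only: of_nat_sum)
  also have "\<dots> = (\<Sum>I\<in>?A. Gr k m I x)"
    by (rule sum.cong[OF refl]) (rule term_eq, auto)
  finally show ?thesis .
qed

lemma Gr_bounds: "0 \<le> Gr k m I x" "Gr k m I x \<le> 2"
  unfolding Gr_def by auto

lemma meas_num:
  fixes P :: "'a::euclidean_space measure"
  assumes sP: "sets P = sets borel"
  shows "(\<lambda>x. real (num_ksets k m x)) \<in> borel_measurable (PiM {..<m} (\<lambda>_. P))"
proof -
  have "sets (PiM {..<m} (\<lambda>_. P)) = sets (PiM {..<m} (\<lambda>_. borel :: 'a measure))"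
    using sP by (intro sets_PiM_cong) auto
  then have eq: "borel_measurable (PiM {..<m} (\<lambda>_. P)) = borel_measurable (PiM {..<m} (\<lambda>_. borel :: 'a measure))"
    by (intro measurable_cong_sets) auto
  have "(\<lambda>x. \<Sum>I\<in>{I. I \<subseteq> {..<m} \<and> card I = DIM('a)}. Gr k m I x) \<in> borel_measurable (PiM {..<m} (\<lambda>_. borel :: 'a measure))"
    by (rule borel_measurable_sum) (rule meas_Gr, auto)
  then show ?thesis unfolding eq num_sum .
qed

lemma num_bound:
  fixes x :: "nat \<Rightarrow> 'a::euclidean_space"
  shows "0 \<le> real (num_ksets k m x)" "real (num_ksets k m x) \<le> 2 * 2 ^ m"
proof -
  let ?A = "{I. I \<subseteq> {..<m} \<and> card I = DIM('a)}"
  have "card ?A \<le> card (Pow {..<m})" by (rule card_mono) auto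
  then have cA: "real (card ?A) \<le> 2 ^ m" by (simp add: card_Pow)
  have "real (num_ksets k m x) = (\<Sum>I\<in>?A. Gr k m I x)" by (rule num_sum)
  also have "\<dots> \<le> (\<Sum>I\<in>?A. 2)" by (rule sum_mono) (rule Gr_bounds)
  also have "\<dots> = 2 * real (card ?A)" by simp
  also have "\<dots> \<le> 2 * 2 ^ m" using cA by simp
  finally show "real (num_ksets k m x) \<le> 2 * 2 ^ m" .
qed simp

definition NS :: "nat \<Rightarrow> nat set \<Rightarrow> (nat \<Rightarrow> 'a::euclidean_space) \<Rightarrow> nat" where
  "NS k S x = (\<Sum>I\<in>{I. I \<subseteq> S \<and> card I = DIM('a) \<and> inj_on x I \<and> \<not> affine_dependent (x ` I)}.
        card {h \<in> open_halfspaces_through x I. card {j\<in>S. x j \<in> h} = k})"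

lemma num_NS: "num_ksets k m x = NS k {..<m} x"
  unfolding num_ksets_def NS_def spanning_dsubset_def by simp

lemma NS_relabel:
  fixes x y :: "nat \<Rightarrow> 'a::euclidean_space"
  assumes inj: "inj_on \<sigma> T" and img: "\<sigma> ` T = S" and y: "\<And>j. j \<in> T \<Longrightarrow> y j = x (\<sigma> j)"
  shows "NS k T y = NS k S x"
  unfolding NS_def
proof (rule sum.reindex_bij_witness[where j="\<lambda>I. \<sigma> ` I" and i="\<lambda>J. {t\<in>T. \<sigma> t \<in> J}"])
  have yx: "\<forall>t\<in>T. y t = x (\<sigma> t)" using y by blast
  have yimg: "y ` I = x ` (\<sigma> ` I)" if "I \<subseteq> T" for I
  proof -
    have "y ` I = (\<lambda>j. x (\<sigma> j)) ` I" by (rule image_cong[OF refl]) (use that yx in blast)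
    then show ?thesis by (simp only: image_image)
  qed
  have yinj: "inj_on y I \<longleftrightarrow> inj_on x (\<sigma> ` I)" if "I \<subseteq> T" for I
  proof -
    have injI: "inj_on \<sigma> I" using inj that inj_on_subset by blast
    have "inj_on y I \<longleftrightarrow> inj_on (x \<circ> \<sigma>) I" by (rule inj_on_cong) (use that yx in auto)
    also have "\<dots> \<longleftrightarrow> inj_on x (\<sigma> ` I)" using comp_inj_on_iff[OF injI] by blast
    finally show ?thesis .
  qed
  have ycard: "card (\<sigma> ` I) = card I" if "I \<subseteq> T" for I
    using card_image[OF inj_on_subset[OF inj that]] .
  {
  fix I assume "I \<in> {I. I \<subseteq> T \<and> card I = DIM('a) \<and> inj_on y I \<and> \<not> affine_dependent (y ` I)}"
  then have I: "I \<subseteq> T" "card I = DIM('a)" "inj_on y I" "\<not> affine_dependent (y ` I)" by auto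
  show "{t \<in> T. \<sigma> t \<in> \<sigma> ` I} = I" using I(1) inj_on_image_mem_iff[OF inj] by blast
  have "\<sigma> ` I \<subseteq> S" using I(1) img by blast
  then show "\<sigma> ` I \<in> {I. I \<subseteq> S \<and> card I = DIM('a) \<and> inj_on x I \<and> \<not> affine_dependent (x ` I)}"
    using I ycard[OF I(1)] yinj[OF I(1)] yimg[OF I(1)] by simp
  have hsc: "(\<forall>i\<in>\<sigma> ` I. a \<bullet> x i = b) \<longleftrightarrow> (\<forall>i\<in>I. a \<bullet> y i = b)" for a b
  proof -
    have yI': "\<And>i. i \<in> I \<Longrightarrow> y i = x (\<sigma> i)" using I(1) yx by blast
    show ?thesis by (auto simp: yI')
  qed
  have hs: "open_halfspaces_through x (\<sigma> ` I) = open_halfspaces_through y I"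
    unfolding open_halfspaces_through_def hsc ..
  have cnt: "card {j\<in>S. x j \<in> h} = card {j\<in>T. y j \<in> h}" for h
  proof -
    have "{j\<in>S. x j \<in> h} = \<sigma> ` {j\<in>T. y j \<in> h}"
    proof (rule set_eqI, rule iffI)
      fix z assume "z \<in> {j\<in>S. x j \<in> h}"
      then have z: "z \<in> S" "x z \<in> h" by auto
      then obtain t where t: "t \<in> T" "z = \<sigma> t" using img by blast
      then have "y t \<in> h" using yx z by simp
      then show "z \<in> \<sigma> ` {j\<in>T. y j \<in> h}" using t by blast
    next
      fix z assume "z \<in> \<sigma> ` {j\<in>T. y j \<in> h}"
      then obtain t where t: "t \<in> T" "y t \<in> h" "z = \<sigma> t" by blast
      then have "x z \<in> h" using yx by simp
      moreover have "z \<in> S" using t img by blast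
      ultimately show "z \<in> {j\<in>S. x j \<in> h}" by simp
    qed
    then show ?thesis using card_image[OF inj_on_subset[OF inj, of "{j\<in>T. y j \<in> h}"]] by auto
  qed
  show "card {h \<in> open_halfspaces_through x (\<sigma> ` I). card {j\<in>S. x j \<in> h} = k} =
        card {h \<in> open_halfspaces_through y I. card {j\<in>T. y j \<in> h} = k}"
    unfolding hs cnt ..
  }
  fix J assume "J \<in> {I. I \<subseteq> S \<and> card I = DIM('a) \<and> inj_on x I \<and> \<not> affine_dependent (x ` I)}"
  then have J: "J \<subseteq> S" "card J = DIM('a)" "inj_on x J" "\<not> affine_dependent (x ` J)" by auto
  let ?I = "{t\<in>T. \<sigma> t \<in> J}"
  have sub: "?I \<subseteq> T" by blast
  have sI: "\<sigma> ` ?I = J" using J(1) img by blast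
  show "\<sigma> ` ?I = J" by (rule sI)
  show "?I \<in> {I. I \<subseteq> T \<and> card I = DIM('a) \<and> inj_on y I \<and> \<not> affine_dependent (y ` I)}"
    using J sub ycard[OF sub] yinj[OF sub] yimg[OF sub] sI by simp
qed

lemma hs_disj:
  assumes "h \<in> open_halfspaces_through x I" "i \<in> I"
  shows "x i \<notin> h"
  using assms unfolding open_halfspaces_through_def by auto

lemma spanning_hs:
  fixes x :: "nat \<Rightarrow> 'a::euclidean_space"
  assumes sp: "spanning_dsubset x m I"
  shows "\<exists>u p. u \<noteq> 0 \<and> open_halfspaces_through x I = {{y. u \<bullet> p < u \<bullet> y}, {y. (-u) \<bullet> p < (-u) \<bullet> y}}"
proof -
  have I: "I \<subseteq> {..<m}" "card I = DIM('a)" and inj: "inj_on x I" and naff: "\<not> affine_dependent (x ` I)"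
    using sp unfolding spanning_dsubset_def by auto
  define ls where "ls = sorted_list_of_set I"
  have fin: "finite I" using I DIM_positive[where 'a='a] card_gt_0_iff by metis
  have sl: "set ls = I" "distinct ls" "length ls = DIM('a)" using fin ls_def I by auto
  have indep: "independent (vv x ls ` {..<DIM('a) - 1})"
    using affine_vv(2)[OF I(2) ls_def inj] naff by simp
  have "dim (span (vv x ls ` {..<DIM('a) - 1})) = card (vv x ls ` {..<DIM('a) - 1})"
    by (rule dim_span_eq_card_independent[OF indep])
  also have "\<dots> = DIM('a) - 1" using card_image[OF affine_vv(1)[OF I(2) ls_def inj]] by simp
  finally have dimV: "dim (span (vv x ls ` {..<length ls - 1})) = DIM('a) - 1" using sl by simp
  define u where "u = nrm x ls"
  have u: "u \<noteq> 0" "\<And>l. l < length ls - 1 \<Longrightarrow> u \<bullet> vv x ls l = 0"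
    using nrm_props[OF sl(3)] unfolding u_def by auto
  show ?thesis by (intro exI[of _ u] exI[of _ "x (ls!0)"] conjI u(1) hs_char[OF sl(1) sl(3) u dimV])
qed

lemma spanning_hs_finite:
  fixes x :: "nat \<Rightarrow> 'a::euclidean_space"
  assumes "spanning_dsubset x m I"
  shows "finite (open_halfspaces_through x I)"
proof -
  obtain u p where "open_halfspaces_through x I = {{y. u \<bullet> p < u \<bullet> y}, {y. (-u) \<bullet> p < (-u) \<bullet> y}}"
    using spanning_hs[OF assms] by blast
  then show ?thesis by simp
qed

lemma card_filter_sum:
  assumes "finite A"
  shows "card {h\<in>A. P h} = (\<Sum>h\<in>A. if P h then 1 else 0)"
proof -
  have "card {h\<in>A. P h} = (\<Sum>h\<in>{h\<in>A. P h}. 1)" by simp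
  also have "\<dots> = (\<Sum>h\<in>A. if P h then 1 else 0)" by (rule sum.inter_filter[OF assms])
  finally show ?thesis .
qed

lemma count_subsets:
  assumes U: "finite U" and IJ: "I \<subseteq> U" "J \<subseteq> U" "I \<inter> J = {}" and r: "card I \<le> r"
  shows "card {S. S \<subseteq> U \<and> card S = r \<and> I \<subseteq> S \<and> S \<inter> J = {}} = (card U - card I - card J) choose (r - card I)"
proof -
  let ?W = "U - I - J"
  let ?A = "{S. S \<subseteq> U \<and> card S = r \<and> I \<subseteq> S \<and> S \<inter> J = {}}"
  let ?B = "{T. T \<subseteq> ?W \<and> card T = r - card I}"
  have finI: "finite I" using U IJ(1) finite_subset by blast
  have finJ: "finite J" using U IJ(2) finite_subset by blast
  have cW: "card ?W = card U - card I - card J"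
  proof -
    have "card (U - I) = card U - card I" using card_Diff_subset[OF finI IJ(1)] .
    moreover have "J \<subseteq> U - I" using IJ by blast
    then have "card (U - I - J) = card (U - I) - card J" using card_Diff_subset[OF finJ] by blast
    ultimately show ?thesis by simp
  qed
  have "bij_betw (\<lambda>S. S - I) ?A ?B"
  proof (rule bij_betw_byWitness[where f'="\<lambda>T. T \<union> I"])
    show "\<forall>S\<in>?A. S - I \<union> I = S" by blast
    show "\<forall>T\<in>?B. T \<union> I - I = T" by blast
    show "(\<lambda>S. S - I) ` ?A \<subseteq> ?B"
    proof
      fix T assume "T \<in> (\<lambda>S. S - I) ` ?A"
      then obtain S where S: "S \<subseteq> U" "card S = r" "I \<subseteq> S" "S \<inter> J = {}" "T = S - I" by blast
      have "finite S" using S(1) U finite_subset by blast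
      then have "card T = r - card I" using S card_Diff_subset[OF finI S(3)] by simp
      moreover have "T \<subseteq> ?W" using S by blast
      ultimately show "T \<in> ?B" by blast
    qed
    show "(\<lambda>T. T \<union> I) ` ?B \<subseteq> ?A"
    proof
      fix S assume "S \<in> (\<lambda>T. T \<union> I) ` ?B"
      then obtain T where T: "T \<subseteq> ?W" "card T = r - card I" "S = T \<union> I" by blast
      have "finite T" using T(1) U finite_subset by blast
      moreover have "T \<inter> I = {}" using T(1) by blast
      ultimately have "card S = card T + card I" using T(3) finI card_Un_disjoint by blast
      then have "card S = r" using T(2) r by simp
      moreover have "S \<subseteq> U" using T IJ by blast
      moreover have "S \<inter> J = {}" using T IJ by blast
      ultimately show "S \<in> ?A" using T(3) by blast
    qed
  qed
  then have "card ?A = card ?B" by (rule bij_betw_same_card)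
  also have "\<dots> = card ?W choose (r - card I)"
    using n_subsets[of ?W "r - card I"] U by simp
  finally show ?thesis using cW by simp
qed

lemma double_count:
  fixes x :: "nat \<Rightarrow> 'a::euclidean_space"
  assumes r: "DIM('a) \<le> r"
  shows "(\<Sum>S\<in>{S. S \<subseteq> {..<n} \<and> card S = r}. NS 0 S x)
       = (\<Sum>I\<in>{I. spanning_dsubset x n I}. \<Sum>h\<in>open_halfspaces_through x I.
            (n - DIM('a) - card {j\<in>{..<n}. x j \<in> h}) choose (r - DIM('a)))"
proof -
  let ?SS = "{S. S \<subseteq> {..<n} \<and> card S = r}"
  let ?Sp = "{I. spanning_dsubset x n I}"
  let ?H = "\<lambda>I. open_halfspaces_through x I"
  let ?g = "\<lambda>S I h. if I \<subseteq> S \<and> {j\<in>S. x j \<in> h} = {} then 1 else (0::nat)"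
  have finSS: "finite ?SS" by (rule finite_subset[of _ "Pow {..<n}"]) auto
  have finSp: "finite ?Sp" by (rule finite_subset[of _ "Pow {..<n}"]) (auto simp: spanning_dsubset_def)
  have finH: "finite (?H I)" if "I \<in> ?Sp" for I using spanning_hs_finite that by auto
  have a: "NS 0 S x = (\<Sum>I\<in>?Sp. \<Sum>h\<in>?H I. ?g S I h)" if S: "S \<in> ?SS" for S
  proof -
    have finS: "finite S" using S finite_subset by auto
    have e: "{I. I \<subseteq> S \<and> card I = DIM('a) \<and> inj_on x I \<and> \<not> affine_dependent (x ` I)} = {I \<in> ?Sp. I \<subseteq> S}"
      using S unfolding spanning_dsubset_def by auto
    have "NS 0 S x = (\<Sum>I\<in>{I \<in> ?Sp. I \<subseteq> S}. card {h \<in> ?H I. card {j\<in>S. x j \<in> h} = 0})"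
      unfolding NS_def e ..
    also have "\<dots> = (\<Sum>I\<in>?Sp. if I \<subseteq> S then card {h \<in> ?H I. card {j\<in>S. x j \<in> h} = 0} else 0)"
      by (rule sum.inter_filter[OF finSp])
    also have "\<dots> = (\<Sum>I\<in>?Sp. \<Sum>h\<in>?H I. ?g S I h)"
    proof (rule sum.cong[OF refl])
      fix I assume I: "I \<in> ?Sp"
      have c0: "card {j\<in>S. x j \<in> h} = 0 \<longleftrightarrow> {j\<in>S. x j \<in> h} = {}" for h
        using finS by simp
      show "(if I \<subseteq> S then card {h \<in> ?H I. card {j\<in>S. x j \<in> h} = 0} else 0) = (\<Sum>h\<in>?H I. ?g S I h)"
      proof (cases "I \<subseteq> S")
        case True
        then show ?thesis using card_filter_sum[OF finH[OF I], of "\<lambda>h. card {j\<in>S. x j \<in> h} = 0"] c0 by simp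
      next
        case False
        then show ?thesis by simp
      qed
    qed
    finally show ?thesis .
  qed
  have "(\<Sum>S\<in>?SS. NS 0 S x) = (\<Sum>S\<in>?SS. \<Sum>I\<in>?Sp. \<Sum>h\<in>?H I. ?g S I h)"
    by (rule sum.cong[OF refl]) (rule a)
  also have "\<dots> = (\<Sum>I\<in>?Sp. \<Sum>S\<in>?SS. \<Sum>h\<in>?H I. ?g S I h)" by (rule sum.swap)
  also have "\<dots> = (\<Sum>I\<in>?Sp. \<Sum>h\<in>?H I. \<Sum>S\<in>?SS. ?g S I h)"
    by (rule sum.cong[OF refl]) (rule sum.swap)
  also have "\<dots> = (\<Sum>I\<in>?Sp. \<Sum>h\<in>?H I. (n - DIM('a) - card {j\<in>{..<n}. x j \<in> h}) choose (r - DIM('a)))"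
  proof (intro sum.cong[OF refl])
    fix I h assume I: "I \<in> ?Sp" and h: "h \<in> ?H I"
    have Isub: "I \<subseteq> {..<n}" and cI: "card I = DIM('a)" using I unfolding spanning_dsubset_def by auto
    let ?J = "{j\<in>{..<n}. x j \<in> h}"
    have disj: "I \<inter> ?J = {}" using hs_disj[OF h] by blast
    have "(\<Sum>S\<in>?SS. ?g S I h) = card {S \<in> ?SS. I \<subseteq> S \<and> {j\<in>S. x j \<in> h} = {}}"
      using card_filter_sum[OF finSS, of "\<lambda>S. I \<subseteq> S \<and> {j\<in>S. x j \<in> h} = {}"] by simp
    also have "{S \<in> ?SS. I \<subseteq> S \<and> {j\<in>S. x j \<in> h} = {}} = {S. S \<subseteq> {..<n} \<and> card S = r \<and> I \<subseteq> S \<and> S \<inter> ?J = {}}"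
      by blast
    also have "card \<dots> = (card {..<n} - card I - card ?J) choose (r - card I)"
      by (rule count_subsets) (use Isub disj cI r in auto)
    finally show "(\<Sum>S\<in>?SS. ?g S I h) = (n - DIM('a) - card ?J) choose (r - DIM('a))"
      using cI by simp
  qed
  finally show ?thesis .
qed

lemma sum_h_split:
  assumes "finite H"
  shows "(\<Sum>h\<in>H. (if c h = (0::nat) then A else 0) + (if c h = 1 then B else (0::nat)))
       = A * card {h\<in>H. c h = 0} + B * card {h\<in>H. c h = 1}"
proof -
  have t: "\<And>h. (if c h = (0::nat) then A else 0) + (if c h = 1 then B else (0::nat))
      = A * (if c h = 0 then 1 else 0) + B * (if c h = 1 then 1 else 0)" by simp
  have "(\<Sum>h\<in>H. (if c h = (0::nat) then A else 0) + (if c h = 1 then B else (0::nat)))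
      = (\<Sum>h\<in>H. A * (if c h = 0 then 1 else 0)) + (\<Sum>h\<in>H. B * (if c h = 1 then 1 else 0))"
    unfolding t by (rule sum.distrib)
  also have "\<dots> = A * card {h\<in>H. c h = 0} + B * card {h\<in>H. c h = 1}"
    unfolding sum_distrib_left[symmetric] card_filter_sum[OF assms] ..
  finally show ?thesis .
qed

lemma choose_split:
  "(if c = (0::nat) then (N choose k) else 0) + (if c = 1 then ((N - 1) choose k) else 0) \<le> (N - c) choose k"
  by (cases "c = 0"; cases "c = 1") auto

lemma num_Sp:
  "num_ksets k n x = (\<Sum>I\<in>{I. spanning_dsubset x n I}. card {h \<in> open_halfspaces_through x I. card {j\<in>{..<n}. x j \<in> h} = k})"
  unfolding num_ksets_def ..

lemma hs_count_le:
  fixes x :: "nat \<Rightarrow> 'a::euclidean_space"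
  assumes I: "spanning_dsubset x n I" and h: "h \<in> open_halfspaces_through x I"
  shows "card {j\<in>{..<n}. x j \<in> h} + DIM('a) \<le> n"
proof -
  have Isub: "I \<subseteq> {..<n}" and cI: "card I = DIM('a)" using I unfolding spanning_dsubset_def by auto
  let ?J = "{j\<in>{..<n}. x j \<in> h}"
  have disj: "I \<inter> ?J = {}" using hs_disj[OF h] by blast
  have "card (I \<union> ?J) = card I + card ?J"
    by (rule card_Un_disjoint) (use Isub finite_subset disj in auto)
  moreover have "card (I \<union> ?J) \<le> n" using card_mono[of "{..<n}" "I \<union> ?J"] Isub by auto
  ultimately show ?thesis using cI by simp
qed

lemma pw_ineq:
  fixes x :: "nat \<Rightarrow> 'a::euclidean_space"
  assumes r: "DIM('a) \<le> r"
  shows "((n - DIM('a)) choose (r - DIM('a))) * num_ksets 0 n x + ((n - DIM('a) - 1) choose (r - DIM('a))) * num_ksets 1 n x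
       \<le> (\<Sum>S\<in>{S. S \<subseteq> {..<n} \<and> card S = r}. NS 0 S x)"
proof -
  let ?d = "DIM('a)"
  let ?Sp = "{I. spanning_dsubset x n I}"
  let ?H = "\<lambda>I. open_halfspaces_through x I"
  let ?c = "\<lambda>h. card {j\<in>{..<n}. x j \<in> h}"
  let ?A = "(n - ?d) choose (r - ?d)" and ?B = "(n - ?d - 1) choose (r - ?d)"
  have "?A * num_ksets 0 n x + ?B * num_ksets 1 n x
      = (\<Sum>I\<in>?Sp. ?A * card {h \<in> ?H I. ?c h = 0} + ?B * card {h \<in> ?H I. ?c h = 1})"
    unfolding num_Sp by (simp add: sum_distrib_left sum.distrib)
  also have "\<dots> = (\<Sum>I\<in>?Sp. \<Sum>h\<in>?H I. (if ?c h = 0 then ?A else 0) + (if ?c h = 1 then ?B else 0))"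
    by (rule sum.cong[OF refl]) (rule sum_h_split[symmetric], rule spanning_hs_finite, auto)
  also have "\<dots> \<le> (\<Sum>I\<in>?Sp. \<Sum>h\<in>?H I. (n - ?d - ?c h) choose (r - ?d))"
    by (intro sum_mono) (rule choose_split)
  also have "\<dots> = (\<Sum>S\<in>{S. S \<subseteq> {..<n} \<and> card S = r}. NS 0 S x)"
    by (rule double_count[OF r, symmetric])
  finally show ?thesis .
qed

lemma pw_eq:
  fixes x :: "nat \<Rightarrow> 'a::euclidean_space"
  assumes d: "DIM('a) < n"
  shows "(\<Sum>S\<in>{S. S \<subseteq> {..<n} \<and> card S = n - 1}. NS 0 S x)
       = (n - DIM('a)) * num_ksets 0 n x + num_ksets 1 n x"
proof -
  let ?d = "DIM('a)"
  let ?Sp = "{I. spanning_dsubset x n I}"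
  let ?H = "\<lambda>I. open_halfspaces_through x I"
  let ?c = "\<lambda>h. card {j\<in>{..<n}. x j \<in> h}"
  have "(\<Sum>S\<in>{S. S \<subseteq> {..<n} \<and> card S = n - 1}. NS 0 S x)
      = (\<Sum>I\<in>?Sp. \<Sum>h\<in>?H I. (n - ?d - ?c h) choose (n - 1 - ?d))"
    by (rule double_count) (use d in simp)
  also have "\<dots> = (\<Sum>I\<in>?Sp. \<Sum>h\<in>?H I. (if ?c h = 0 then n - ?d else 0) + (if ?c h = 1 then 1 else 0))"
  proof (intro sum.cong[OF refl])
    fix I h assume I: "I \<in> ?Sp" and h: "h \<in> ?H I"
    have le: "?c h + ?d \<le> n" using hs_count_le[of x n I h] I h by auto
    show "(n - ?d - ?c h) choose (n - 1 - ?d) = (if ?c h = 0 then n - ?d else 0) + (if ?c h = 1 then 1 else 0)"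
    proof (cases "?c h = 0")
      case True
      have "(n - ?d) choose (n - 1 - ?d) = (n - ?d) choose ((n - ?d) - (n - 1 - ?d))"
        by (rule binomial_symmetric) simp
      moreover have "(n - ?d) - (n - 1 - ?d) = 1" using d by simp
      ultimately have e1: "(n - ?d) choose (n - 1 - ?d) = n - ?d" by simp
      show ?thesis unfolding True using e1 by simp
    next
      case False
      show ?thesis
      proof (cases "?c h = 1")
        case True
        show ?thesis unfolding True by simp
      next
        case False2: False
        have ar: "\<And>C. C \<noteq> 0 \<Longrightarrow> C \<noteq> 1 \<Longrightarrow> C + ?d \<le> n \<Longrightarrow> n - ?d - C < n - 1 - ?d" using d by arith
        have "n - ?d - ?c h < n - 1 - ?d" by (rule ar[OF False False2 le])
        then have z: "(n - ?d - ?c h) choose (n - 1 - ?d) = 0" by (rule binomial_eq_0)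
        show ?thesis unfolding z if_not_P[OF False] if_not_P[OF False2] by simp
      qed
    qed
  qed
  also have "\<dots> = (\<Sum>I\<in>?Sp. (n - ?d) * card {h \<in> ?H I. ?c h = 0} + 1 * card {h \<in> ?H I. ?c h = 1})"
    by (rule sum.cong[OF refl]) (rule sum_h_split, rule spanning_hs_finite, auto)
  also have "\<dots> = (n - ?d) * num_ksets 0 n x + num_ksets 1 n x"
    unfolding num_Sp by (simp add: sum_distrib_left sum.distrib)
  finally show ?thesis .
qed

lemma integrable_num:
  fixes P :: "'a::euclidean_space measure"
  assumes pP: "prob_space P" and sP: "sets P = sets borel"
  shows "integrable (PiM {..<m} (\<lambda>_. P)) (\<lambda>x. real (num_ksets k m x))"
proof -
  interpret prob_space "PiM {..<m} (\<lambda>_. P)" by (rule prob_space_PiM) (use pP in auto)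
  show ?thesis
  proof (rule integrable_const_bound[where B="2 * 2 ^ m"])
    show "AE x in PiM {..<m} (\<lambda>_. P). norm (real (num_ksets k m x)) \<le> 2 * 2 ^ m"
      using num_bound by (intro AE_I2) simp
    show "(\<lambda>x. real (num_ksets k m x)) \<in> borel_measurable (PiM {..<m} (\<lambda>_. P))"
      by (rule meas_num[OF sP])
  qed
qed

lemma exp_nonneg:
  fixes P :: "'a::euclidean_space measure"
  shows "0 \<le> expected_ksets P k m"
  unfolding expected_ksets_def by (rule integral_nonneg_AE) simp

lemma exp_NS:
  fixes P :: "'a::euclidean_space measure"
  assumes pP: "prob_space P" and sP: "sets P = sets borel" and S: "S \<subseteq> {..<n}" "card S = r"
  shows "integrable (PiM {..<n} (\<lambda>_. P)) (\<lambda>x. real (NS 0 S x))"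
    and "(\<integral>x. real (NS 0 S x) \<partial>PiM {..<n} (\<lambda>_. P)) = expected_ksets P 0 r"
proof -
  have finS: "finite S" using S finite_subset by blast
  obtain \<sigma> where bij: "bij_betw \<sigma> {0..<card S} S" using ex_bij_betw_nat_finite[OF finS] by blast
  then have bij': "bij_betw \<sigma> {..<r} S" using S(2) by (simp add: atLeast0LessThan)
  then have inj: "inj_on \<sigma> {..<r}" and img: "\<sigma> ` {..<r} = S" by (auto simp: bij_betw_def)
  have \<sigma>n: "\<sigma> i \<in> {..<n}" if "i \<in> {..<r}" for i using img S(1) that by blast
  define t where "t = (\<lambda>(x::nat \<Rightarrow> 'a). \<lambda>i\<in>{..<r}. x (\<sigma> i))"
  have tm: "t \<in> measurable (PiM {..<n} (\<lambda>_. P)) (PiM {..<r} (\<lambda>_. P))"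
    unfolding t_def by (rule measurable_restrict) (rule measurable_component_singleton[OF \<sigma>n])
  have eqNS: "NS 0 S x = num_ksets 0 r (t x)" for x
  proof -
    have "NS 0 {..<r} (t x) = NS 0 S x"
      by (rule NS_relabel[OF inj img]) (simp add: t_def)
    then show ?thesis by (simp add: num_NS)
  qed
  have d: "distr (PiM {..<n} (\<lambda>_. P)) (PiM {..<r} (\<lambda>_. P)) t = PiM {..<r} (\<lambda>_. P)"
    using distr_PiM_reindex[of "{..<n}" "\<lambda>_. P" \<sigma> "{..<r}"] pP inj \<sigma>n unfolding t_def by auto
  have "expected_ksets P 0 r = (\<integral>x. real (num_ksets 0 r x) \<partial>distr (PiM {..<n} (\<lambda>_. P)) (PiM {..<r} (\<lambda>_. P)) t)"
    unfolding expected_ksets_def d ..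
  also have "\<dots> = (\<integral>x. real (num_ksets 0 r (t x)) \<partial>PiM {..<n} (\<lambda>_. P))"
    by (rule integral_distr[OF tm meas_num[OF sP]])
  finally show "(\<integral>x. real (NS 0 S x) \<partial>PiM {..<n} (\<lambda>_. P)) = expected_ksets P 0 r"
    unfolding eqNS by simp
  have "integrable (distr (PiM {..<n} (\<lambda>_. P)) (PiM {..<r} (\<lambda>_. P)) t) (\<lambda>x. real (num_ksets 0 r x))"
    unfolding d by (rule integrable_num[OF pP sP])
  then have "integrable (PiM {..<n} (\<lambda>_. P)) (\<lambda>x. real (num_ksets 0 r (t x)))"
    by (rule integrable_distr[OF tm])
  then show "integrable (PiM {..<n} (\<lambda>_. P)) (\<lambda>x. real (NS 0 S x))"
    unfolding eqNS .
qed

lemma exp_sum: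
  fixes P :: "'a::euclidean_space measure"
  assumes pP: "prob_space P" and sP: "sets P = sets borel"
  shows "integrable (PiM {..<n} (\<lambda>_. P)) (\<lambda>x. real (\<Sum>S\<in>{S. S \<subseteq> {..<n} \<and> card S = r}. NS 0 S x))"
    and "(\<integral>x. real (\<Sum>S\<in>{S. S \<subseteq> {..<n} \<and> card S = r}. NS 0 S x) \<partial>PiM {..<n} (\<lambda>_. P))
           = real (n choose r) * expected_ksets P 0 r"
proof -
  let ?SS = "{S. S \<subseteq> {..<n} \<and> card S = r}"
  have int: "\<And>S. S \<in> ?SS \<Longrightarrow> integrable (PiM {..<n} (\<lambda>_. P)) (\<lambda>x. real (NS 0 S x))"
    using exp_NS(1)[OF pP sP] by auto
  show "integrable (PiM {..<n} (\<lambda>_. P)) (\<lambda>x. real (\<Sum>S\<in>?SS. NS 0 S x))"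
    unfolding of_nat_sum by (rule Bochner_Integration.integrable_sum) (rule int)
  have "(\<integral>x. real (\<Sum>S\<in>?SS. NS 0 S x) \<partial>PiM {..<n} (\<lambda>_. P))
      = (\<Sum>S\<in>?SS. \<integral>x. real (NS 0 S x) \<partial>PiM {..<n} (\<lambda>_. P))"
    unfolding of_nat_sum by (rule Bochner_Integration.integral_sum) (rule int)
  also have "\<dots> = (\<Sum>S\<in>?SS. expected_ksets P 0 r)"
    by (rule sum.cong[OF refl]) (rule exp_NS(2)[OF pP sP], auto)
  also have "\<dots> = real (card ?SS) * expected_ksets P 0 r" by simp
  also have "card ?SS = n choose r" using n_subsets[of "{..<n}" r] by simp
  finally show "(\<integral>x. real (\<Sum>S\<in>?SS. NS 0 S x) \<partial>PiM {..<n} (\<lambda>_. P)) = real (n choose r) * expected_ksets P 0 r" .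
qed

lemma int_comb:
  fixes P :: "'a::euclidean_space measure"
  assumes pP: "prob_space P" and sP: "sets P = sets borel"
  shows "integrable (PiM {..<n} (\<lambda>_. P)) (\<lambda>x. A * real (num_ksets 0 n x) + B * real (num_ksets 1 n x))"
    and "(\<integral>x. A * real (num_ksets 0 n x) + B * real (num_ksets 1 n x) \<partial>PiM {..<n} (\<lambda>_. P))
          = A * expected_ksets P 0 n + B * expected_ksets P 1 n"
proof -
  have i0: "integrable (PiM {..<n} (\<lambda>_. P)) (\<lambda>x. A * real (num_ksets 0 n x))"
    by (rule integrable_mult_right) (rule integrable_num[OF pP sP])
  have i1: "integrable (PiM {..<n} (\<lambda>_. P)) (\<lambda>x. B * real (num_ksets 1 n x))"
    by (rule integrable_mult_right) (rule integrable_num[OF pP sP])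
  show "integrable (PiM {..<n} (\<lambda>_. P)) (\<lambda>x. A * real (num_ksets 0 n x) + B * real (num_ksets 1 n x))"
    using i0 i1 by (rule Bochner_Integration.integrable_add)
  show "(\<integral>x. A * real (num_ksets 0 n x) + B * real (num_ksets 1 n x) \<partial>PiM {..<n} (\<lambda>_. P))
          = A * expected_ksets P 0 n + B * expected_ksets P 1 n"
    unfolding expected_ksets_def Bochner_Integration.integral_add[OF i0 i1] integral_mult_right_zero ..
qed

lemma part2:
  fixes P :: "'a::euclidean_space measure"
  assumes pP: "prob_space P" and sP: "sets P = sets borel" and r: "DIM('a) \<le> r"
  shows "real ((n - DIM('a)) choose (r - DIM('a))) * expected_ksets P 0 n
       + real ((n - DIM('a) - 1) choose (r - DIM('a))) * expected_ksets P 1 n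
       \<le> real (n choose r) * expected_ksets P 0 r"
proof -
  let ?A = "real ((n - DIM('a)) choose (r - DIM('a)))" and ?B = "real ((n - DIM('a) - 1) choose (r - DIM('a)))"
  have "?A * expected_ksets P 0 n + ?B * expected_ksets P 1 n
      = (\<integral>x. ?A * real (num_ksets 0 n x) + ?B * real (num_ksets 1 n x) \<partial>PiM {..<n} (\<lambda>_. P))"
    by (rule int_comb(2)[OF pP sP, symmetric])
  also have "\<dots> \<le> (\<integral>x. real (\<Sum>S\<in>{S. S \<subseteq> {..<n} \<and> card S = r}. NS 0 S x) \<partial>PiM {..<n} (\<lambda>_. P))"
  proof (rule integral_mono[OF int_comb(1)[OF pP sP] exp_sum(1)[OF pP sP]])
    fix x :: "nat \<Rightarrow> 'a"
    have "((n - DIM('a)) choose (r - DIM('a))) * num_ksets 0 n x + ((n - DIM('a) - 1) choose (r - DIM('a))) * num_ksets 1 n x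
       \<le> (\<Sum>S\<in>{S. S \<subseteq> {..<n} \<and> card S = r}. NS 0 S x)" by (rule pw_ineq[OF r])
    then show "?A * real (num_ksets 0 n x) + ?B * real (num_ksets 1 n x) \<le> real (\<Sum>S\<in>{S. S \<subseteq> {..<n} \<and> card S = r}. NS 0 S x)"
      by (metis (mono_tags, lifting) of_nat_add of_nat_le_iff of_nat_mult)
  qed
  also have "\<dots> = real (n choose r) * expected_ksets P 0 r" by (rule exp_sum(2)[OF pP sP])
  finally show ?thesis .
qed

lemma part1:
  fixes P :: "'a::euclidean_space measure"
  assumes pP: "prob_space P" and sP: "sets P = sets borel" and d: "DIM('a) < n"
  shows "real n * expected_ksets P 0 (n - 1) = real (n - DIM('a)) * expected_ksets P 0 n + expected_ksets P 1 n"
proof -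
  have "real (n choose (n - 1)) * expected_ksets P 0 (n - 1)
      = (\<integral>x. real (\<Sum>S\<in>{S. S \<subseteq> {..<n} \<and> card S = n - 1}. NS 0 S x) \<partial>PiM {..<n} (\<lambda>_. P))"
    by (rule exp_sum(2)[OF pP sP, symmetric])
  also have "\<dots> = (\<integral>x. real (n - DIM('a)) * real (num_ksets 0 n x) + 1 * real (num_ksets 1 n x) \<partial>PiM {..<n} (\<lambda>_. P))"
    by (rule Bochner_Integration.integral_cong[OF refl]) (simp only: pw_eq[OF d] of_nat_add of_nat_mult mult_1)
  also have "\<dots> = real (n - DIM('a)) * expected_ksets P 0 n + 1 * expected_ksets P 1 n"
    by (rule int_comb(2)[OF pP sP])
  moreover have "n choose (n - 1) = n" using binomial_symmetric[of "n - 1" n] d by simp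
  ultimately show ?thesis by simp
qed

lemma zero_small:
  fixes P :: "'a::euclidean_space measure"
  assumes "m < DIM('a)"
  shows "expected_ksets P k m = 0"
proof -
  have "num_ksets k m x = 0" for x :: "nat \<Rightarrow> 'a"
  proof -
    have "{I. spanning_dsubset x m I} = {}"
    proof (rule ccontr)
      assume "{I. spanning_dsubset x m I} \<noteq> {}"
      then obtain I where "I \<subseteq> {..<m}" "card I = DIM('a)" unfolding spanning_dsubset_def by auto
      then have "DIM('a) \<le> m" using card_mono[of "{..<m}" I] by auto
      then show False using assms by simp
    qed
    then show ?thesis unfolding num_ksets_def by (simp only: sum.empty)
  qed
  then show ?thesis unfolding expected_ksets_def by simp
qed

lemma ibinom_A:
  assumes "d \<le> r" "r \<le> n"
  shows "ibinom (int n - int d) (int r - int d) = (n - d) choose (r - d)"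
proof -
  have e1: "int n - int d = int (n - d)" and e2: "int r - int d = int (r - d)" using assms by auto
  have rd: "r - d \<le> n - d" using assms by simp
  have "ibinom (int n - int d) (int r - int d) = ibinom (int (n - d)) (int (r - d))" by (simp only: e1 e2)
  also have "\<dots> = (n - d) choose (r - d)"
    by (simp only: ibinom_def nat_int of_nat_0_le_iff of_nat_le_iff rd simp_thms if_True)
  finally show ?thesis .
qed

lemma ibinom_B:
  assumes "d \<le> r" "r \<le> n"
  shows "ibinom (int n - int d - 1) (int r - int d) \<le> (n - d - 1) choose (r - d)"
proof (cases "int r - int d \<le> int n - int d - 1")
  case True
  then have e1: "int n - int d - 1 = int (n - d - 1)" and e2: "int r - int d = int (r - d)" using assms by auto
  have "ibinom (int n - int d - 1) (int r - int d) = ibinom (int (n - d - 1)) (int (r - d))" by (simp only: e1 e2)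
  also have "\<dots> \<le> (n - d - 1) choose (r - d)"
    by (simp only: ibinom_def nat_int) simp
  finally show ?thesis .
next
  case False
  then show ?thesis unfolding ibinom_def by simp
qed

theorem lemma3:
  fixes P :: "'a::euclidean_space measure"
  assumes "prob_space P"
    and "sets P = sets borel"
    and "AE x in PiM {..<DIM('a)} (\<lambda>_. P).
           inj_on x {..<DIM('a)} \<and> \<not> affine_dependent (x ` {..<DIM('a)})"
  shows "(\<forall>n::nat. n > 0 \<longrightarrow>
            expected_ksets P 0 n \<ge> expected_ksets P 0 (n - 1)
              + (real DIM('a) * expected_ksets P 0 n - expected_ksets P 1 n) / real n)
       \<and> (\<forall>n r::nat. 1 \<le> r \<and> r \<le> n \<longrightarrow>
            expected_ksets P 0 r \<ge>
              real (ibinom (int n - int DIM('a)) (int r - int DIM('a))) / real (n choose r)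
                * expected_ksets P 0 n
              + real (ibinom (int n - int DIM('a) - 1) (int r - int DIM('a))) / real (n choose r)
                * expected_ksets P 1 n)"
proof (intro conjI allI impI)
  note pP = assms(1) and sP = assms(2)
  let ?d = "DIM('a)"
  fix n :: nat assume n: "n > 0"
  let ?s0 = "expected_ksets P 0 n" and ?s1 = "expected_ksets P 1 n" and ?t = "expected_ksets P 0 (n - 1)"
  have s1: "0 \<le> ?s1" by (rule exp_nonneg)
  have rn: "real n > 0" using n by simp
  show "?t + (real ?d * ?s0 - ?s1) / real n \<le> ?s0"
  proof (cases "?d < n")
    case True
    have h: "real n * ?t = real (n - ?d) * ?s0 + ?s1" by (rule part1[OF pP sP True])
    have rd: "real (n - ?d) = real n - real ?d" using True by simp
    have "?t = ((real n - real ?d) * ?s0 + ?s1) / real n" using h rd rn by (simp add: field_simps)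
    then have "?t + (real ?d * ?s0 - ?s1) / real n = (real n * ?s0) / real n"
      by (simp add: field_simps add_divide_distrib[symmetric])
    also have "\<dots> = ?s0" using rn by simp
    finally show ?thesis by simp
  next
    case False
    have t0: "?t = 0" using False n by (intro zero_small) simp
    show ?thesis
    proof (cases "n < ?d")
      case True
      then have "?s0 = 0" "?s1 = 0" by (simp_all add: zero_small)
      then show ?thesis using t0 by simp
    next
      case False2: False
      then have nd: "?d = n" using False by simp
      have "(real ?d * ?s0 - ?s1) / real n = ?s0 - ?s1 / real n" using nd rn by (simp add: field_simps)
      moreover have "?s1 / real n \<ge> 0" using s1 rn by simp
      ultimately show ?thesis using t0 by simp
    qed
  qed
next
  note pP = assms(1) and sP = assms(2)
  let ?d = "DIM('a)"
  fix n r :: nat assume nr: "1 \<le> r \<and> r \<le> n"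
  let ?s0 = "expected_ksets P 0 n" and ?s1 = "expected_ksets P 1 n" and ?u = "expected_ksets P 0 r"
  let ?C = "real (n choose r)"
  have s0: "0 \<le> ?s0" and s1: "0 \<le> ?s1" by (rule exp_nonneg)+
  have C: "?C > 0" using nr by simp
  show "real (ibinom (int n - int ?d) (int r - int ?d)) / ?C * ?s0
        + real (ibinom (int n - int ?d - 1) (int r - int ?d)) / ?C * ?s1 \<le> ?u"
  proof (cases "r < ?d")
    case True
    then have "?u = 0" by (simp add: zero_small)
    moreover have "ibinom (int n - int ?d) (int r - int ?d) = 0" "ibinom (int n - int ?d - 1) (int r - int ?d) = 0"
      using True unfolding ibinom_def by auto
    ultimately show ?thesis by simp
  next
    case False
    then have dr: "?d \<le> r" by simp
    let ?A = "real ((n - ?d) choose (r - ?d))" and ?B = "real ((n - ?d - 1) choose (r - ?d))"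
    have IA: "real (ibinom (int n - int ?d) (int r - int ?d)) = ?A" using ibinom_A[OF dr] nr by simp
    have IB: "real (ibinom (int n - int ?d - 1) (int r - int ?d)) \<le> ?B"
      using ibinom_B[OF dr] nr by (simp only: of_nat_le_iff)
    have "real (ibinom (int n - int ?d) (int r - int ?d)) / ?C * ?s0
        + real (ibinom (int n - int ?d - 1) (int r - int ?d)) / ?C * ?s1
        \<le> ?A / ?C * ?s0 + ?B / ?C * ?s1"
      unfolding IA using IB C s1 by (intro add_left_mono mult_right_mono divide_right_mono) auto
    also have "\<dots> = (?A * ?s0 + ?B * ?s1) / ?C" by (simp only: add_divide_distrib times_divide_eq_left)
    also have "\<dots> \<le> (?C * ?u) / ?C" using part2[OF pP sP dr, of n] C by (intro divide_right_mono) auto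
    also have "\<dots> = ?u" using C by simp
    finally show ?thesis .
  qed
qed

end
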